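(* Let $d\ge2$ and $r$ be integers with $d<r<2d$, let $a\in k$, and let $\widetilde X(d,r)\subset\mathbb{A}^3=\mathrm{Spec}\,k[x,y,z]$ be the hypersurface $x^rz+y^d+ax^d=1$ and $\widetilde V(d,r)$ the hypersurface $x^rz+y^d=1$. For $\lambda$ a $d$-th root of unity let $p_\lambda(x)\in k[x]$ be the unique polynomial of degree $\le r-1$ with $p_\lambda(0)=\lambda$ such that $x^r$ divides $1-p_\lambda(x)^d-ax^d$. Then: (1) $p_\lambda(x)=\lambda-\frac{a}{d}\lambda x^d$ for every $d$-th root of unity $\lambda$. (2) Put $\sigma(x,c)=\left(1-\frac{a}{d}x^d\right)c$ (which equals $\frac{1}{1-\lambda}\{p_1(\lambda x)-p_\lambda(\lambda x)\}c$ for every $\lambda\ne1$) and $\tau(x,c)=-\frac{a^2}{d^2}x^{2d-r}+\left(1+\frac{a}{d}x^d\right)c$. Then for every $d$-th root of unity $\lambda$, $\lambda^{1-r}x^r\sigma\!\left(\lambda^{-1}x,\lambda^{r-1}\left(c+\frac{1-\lambda}{x^r}\right)\right)=x^r\sigma(x,c)+p_1(x)-p_\lambda(x)$ and $\lambda^{1-r}x^r\tau\!\left(\lambda^{-1}x,\lambda^{r-1}\left(c+\frac{p_1(x)-p_\lambda(x)}{x^r}\right)\right)=x^r\tau(x,c)+1-\lambda$. (3) There is an isomorphism $\widetilde X(d,r)\times\mathbb{A}^1\cong\widetilde V(d,r)\times\mathbb{A}^1$.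
   Context: Work over an algebraically closed field $k$ of characteristic zero; $x,c$ are independent variables and the identities in (2) are identities of rational functions. *)

theory Defs
  imports "HOL-Computational_Algebra.Polynomial"
begin

definition p_lam :: "'k::field \<Rightarrow> nat \<Rightarrow> nat \<Rightarrow> 'k \<Rightarrow> 'k poly" where
  "p_lam a d r lam = (THE p. degree p \<le> r - 1 \<and> poly p 0 = lam \<and>
      [:0, 1:] ^ r dvd (1 - p ^ d - smult a (monom 1 d)))"

definition sigma_fn :: "'k::field \<Rightarrow> nat \<Rightarrow> 'k \<Rightarrow> 'k \<Rightarrow> 'k" where
  "sigma_fn a d x c = (1 - a / of_nat d * x ^ d) * c"

definition tau_fn :: "'k::field \<Rightarrow> nat \<Rightarrow> nat \<Rightarrow> 'k \<Rightarrow> 'k \<Rightarrow> 'k" where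
  "tau_fn a d r x c = - (a ^ 2 / of_nat d ^ 2) * x ^ (2 * d - r) + (1 + a / of_nat d * x ^ d) * c"

inductive polyfun4 :: "('k::comm_ring_1 \<times> 'k \<times> 'k \<times> 'k \<Rightarrow> 'k) \<Rightarrow> bool" where
  const: "polyfun4 (\<lambda>_. c)"
| proj1: "polyfun4 (\<lambda>(x1, x2, x3, x4). x1)"
| proj2: "polyfun4 (\<lambda>(x1, x2, x3, x4). x2)"
| proj3: "polyfun4 (\<lambda>(x1, x2, x3, x4). x3)"
| proj4: "polyfun4 (\<lambda>(x1, x2, x3, x4). x4)"
| add: "polyfun4 f \<Longrightarrow> polyfun4 g \<Longrightarrow> polyfun4 (\<lambda>p. f p + g p)"
| mult: "polyfun4 f \<Longrightarrow> polyfun4 g \<Longrightarrow> polyfun4 (\<lambda>p. f p * g p)"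

definition polymap4 :: "('k::comm_ring_1 \<times> 'k \<times> 'k \<times> 'k \<Rightarrow> 'k \<times> 'k \<times> 'k \<times> 'k) \<Rightarrow> bool" where
  "polymap4 F \<longleftrightarrow> polyfun4 (\<lambda>p. fst (F p)) \<and> polyfun4 (\<lambda>p. fst (snd (F p)))
     \<and> polyfun4 (\<lambda>p. fst (snd (snd (F p)))) \<and> polyfun4 (\<lambda>p. snd (snd (snd (F p))))"

text \<open>Isomorphism of (reduced) closed subvarieties of A^4, given by their k-points:
  mutually inverse polynomial maps.\<close>
definition iso_affine4 :: "('k::comm_ring_1 \<times> 'k \<times> 'k \<times> 'k) set \<Rightarrow> ('k \<times> 'k \<times> 'k \<times> 'k) set \<Rightarrow> bool" where
  "iso_affine4 S T \<longleftrightarrow> (\<exists>F G. polymap4 F \<and> polymap4 G \<and> F ` S \<subseteq> T \<and> G ` T \<subseteq> S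
      \<and> (\<forall>s\<in>S. G (F s) = s) \<and> (\<forall>t\<in>T. F (G t) = t))"

text \<open>X~(d,r) x A^1 and V~(d,r) x A^1 inside A^4 (last coordinate is the A^1 factor).\<close>
definition Xt_A1 :: "'k::comm_ring_1 \<Rightarrow> nat \<Rightarrow> nat \<Rightarrow> ('k \<times> 'k \<times> 'k \<times> 'k) set" where
  "Xt_A1 a d r = {(x, y, z, w). x ^ r * z + y ^ d + a * x ^ d = 1}"

definition Vt_A1 :: "nat \<Rightarrow> nat \<Rightarrow> ('k::comm_ring_1 \<times> 'k \<times> 'k \<times> 'k) set" where
  "Vt_A1 d r = {(x, y, z, w). x ^ r * z + y ^ d = 1}"

end

theory Submission
  imports Defs
begin


lemma one_plus_pow:
  fixes s :: "'a::comm_ring_1"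
  shows "\<exists>T. (1 + s)^n = 1 + of_nat n * s + s^2 * T"
proof (induction n)
  case 0 show ?case by (rule exI[of _ 0]) simp
next
  case (Suc n)
  then obtain T where T: "(1 + s)^n = 1 + of_nat n * s + s^2 * T" by blast
  show ?case
    by (rule exI[of _ "T + of_nat n + s * T"]) (simp add: T algebra_simps power2_eq_square)
qed

definition Pl :: "'k::field \<Rightarrow> nat \<Rightarrow> 'k \<Rightarrow> 'k poly" where
  "Pl a d lam = [:lam:] - smult (a / of_nat d * lam) (monom 1 d)"

lemma Pl_props:
  fixes a lam :: "'k::field_char_0" and d r :: nat
  assumes d2: "d \<ge> 2" and dr: "d < r" and rd: "r < 2*d" and lam: "lam ^ d = 1"
  shows "degree (Pl a d lam) \<le> r - 1 \<and> poly (Pl a d lam) 0 = lam \<and>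
      [:0, 1:] ^ r dvd (1 - (Pl a d lam) ^ d - smult a (monom 1 d))"
proof (intro conjI)
  show "degree (Pl a d lam) \<le> r - 1"
  proof -
    have "degree (Pl a d lam) \<le> max (degree [:lam:]) (degree (smult (a / of_nat d * lam) (monom (1::'k) d)))"
      unfolding Pl_def by (rule degree_diff_le_max)
    also have "\<dots> \<le> d" using degree_smult_le[of "a / of_nat d * lam" "monom (1::'k) d"] degree_monom_le[of "1::'k" d] by simp
    finally show ?thesis using dr by simp
  qed
  show "poly (Pl a d lam) 0 = lam" using d2 by (simp add: Pl_def poly_monom)
  define s :: "'k poly" where "s = - smult (a / of_nat d) (monom 1 d)"
  obtain T where T: "(1 + s)^d = 1 + of_nat d * s + s^2 * T" using one_plus_pow by blast
  have P: "Pl a d lam = smult lam (1 + s)"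
  proof -
    have "[:lam:] = smult lam (1::'k poly)" by (simp add: one_pCons)
    then show ?thesis by (simp add: Pl_def s_def smult_diff_right smult_add_right mult.commute)
  qed
  have dnz: "(of_nat d :: 'k) \<noteq> 0" using d2 by simp
  have ds: "(of_nat d :: 'k poly) * s = - smult a (monom 1 d)"
    using dnz by (simp add: s_def of_nat_poly)
  have Pd: "(Pl a d lam)^d = (1 + s)^d"
    by (simp add: P smult_power lam)
  have s2: "s^2 = monom 1 r * (smult ((a / of_nat d)^2) (monom 1 (2*d - r)))"
    using rd by (simp add: s_def power2_eq_square mult_monom smult_monom mult_2)
  have "1 - (Pl a d lam) ^ d - smult a (monom 1 d) = - (monom 1 r * (smult ((a / of_nat d)^2) (monom 1 (2*d - r)) * T))"
  proof -
    have "1 - (Pl a d lam) ^ d - smult a (monom 1 d) = -(of_nat d * s) - s^2*T - smult a (monom 1 d)"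
      by (simp add: Pd T)
    also have "\<dots> = - (s^2 * T)" by (simp add: ds)
    finally show ?thesis by (simp add: s2 mult.assoc)
  qed
  moreover have "[:0, 1:] ^ r = (monom 1 r :: 'k poly)" by (simp add: monom_altdef)
  ultimately show "[:0, 1:] ^ r dvd (1 - (Pl a d lam) ^ d - smult a (monom 1 d))"
    by (simp add: dvd_smult)
qed

lemma uniq:
  fixes p q :: "'k::field_char_0 poly" and d r :: nat and lam a :: 'k
  assumes d: "d \<ge> 1" and lam: "lam ^ d = 1"
    and p: "degree p \<le> r - 1" "poly p 0 = lam" "[:0, 1:] ^ r dvd (1 - p ^ d - smult a (monom 1 d))"
    and q: "degree q \<le> r - 1" "poly q 0 = lam" "[:0, 1:] ^ r dvd (1 - q ^ d - smult a (monom 1 d))"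
    and r: "r \<ge> 1"
  shows "p = q"
proof (rule ccontr)
  assume ne: "p \<noteq> q"
  define R where "R = (\<Sum>i<d. q^(d - Suc i) * p^i)"
  have fac: "p^d - q^d = (p - q) * R" unfolding R_def by (rule power_diff_sumr2)
  have "[:0, 1:] ^ r dvd (1 - q ^ d - smult a (monom 1 d)) - (1 - p ^ d - smult a (monom 1 d))"
    by (rule dvd_diff[OF q(3) p(3)])
  hence dv: "[:0, 1:] ^ r dvd (p - q) * R" by (simp add: fac[symmetric])
  have lnz: "lam \<noteq> 0" proof
    assume "lam = 0" thus False using lam d by (simp add: power_0_left)
  qed
  have "poly R 0 = (\<Sum>i<d. lam^(d - Suc i) * lam^i)" unfolding R_def by (simp add: poly_sum p(2) q(2))
  also have "\<dots> = (\<Sum>i<d. lam^(d - 1))"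
    by (rule sum.cong) (auto simp: power_add[symmetric])
  also have "\<dots> = of_nat d * lam^(d-1)" by simp
  finally have R0: "poly R 0 \<noteq> 0" using lnz d by simp
  hence Rnz: "R \<noteq> 0" by auto
  have pq: "p - q \<noteq> 0" using ne by simp
  have oR: "order 0 R = 0" using R0 order_root by blast
  have "r \<le> order 0 ((p - q) * R)" using dv pq Rnz order_divides[of 0 r "(p-q)*R"] by simp
  hence "r \<le> order 0 (p - q)" using order_mult[of "p - q" R 0] pq Rnz oR by simp
  hence "[:0, 1:] ^ r dvd (p - q)" using order_divides[of 0 r "p - q"] by simp
  hence "degree ([:0, 1::'k:] ^ r) \<le> degree (p - q)" by (rule dvd_imp_degree_le[OF _ pq])
  hence "r \<le> degree (p - q)" by (simp add: degree_power_eq)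
  moreover have "degree (p - q) \<le> r - 1" by (rule degree_diff_le[OF p(1) q(1)])
  ultimately show False using r by linarith
qed

lemma p_lam_eq:
  fixes a lam :: "'k::field_char_0" and d r :: nat
  assumes d2: "d \<ge> 2" and dr: "d < r" and rd: "r < 2*d" and lam: "lam ^ d = 1"
  shows "p_lam a d r lam = Pl a d lam"
  unfolding p_lam_def
proof (rule the_equality)
  show "degree (Pl a d lam) \<le> r - 1 \<and> poly (Pl a d lam) 0 = lam \<and>
      [:0, 1:] ^ r dvd (1 - (Pl a d lam) ^ d - smult a (monom 1 d))" using Pl_props[OF assms] .
  fix p assume "degree p \<le> r - 1 \<and> poly p 0 = lam \<and> [:0, 1:] ^ r dvd (1 - p ^ d - smult a (monom 1 d))"
  then have H1: "degree p \<le> r - 1" and H2: "poly p 0 = lam" and H3: "[:0, 1:] ^ r dvd (1 - p ^ d - smult a (monom 1 d))"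
    by blast+
  note PP = Pl_props[OF assms]
  have d1: "d \<ge> 1" using d2 by simp
  have r1: "r \<ge> 1" using dr by simp
  show "p = Pl a d lam"
    using uniq[OF d1 lam H1 H2 H3 conjunct1[OF PP] conjunct1[OF conjunct2[OF PP]] conjunct2[OF conjunct2[OF PP]] r1] .
qed



lemma poly_Pl: "poly (Pl a d lam) x = lam - a / of_nat d * lam * x ^ d"
  by (simp add: Pl_def poly_monom)

lemma part2:
  fixes a lam x c :: "'k::field_char_0"
  assumes lam: "lam ^ d = 1" and l1: "lam \<noteq> 1"
  shows "sigma_fn a d x c = 1 / (1 - lam) *
              (poly (Pl a d 1) (lam * x) - poly (Pl a d lam) (lam * x)) * c"
proof -
  have h: "(lam * x)^d = x^d" by (simp add: power_mult_distrib lam)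
  have "poly (Pl a d 1) (lam * x) - poly (Pl a d lam) (lam * x) = (1 - lam) * (1 - a / of_nat d * x^d)"
  proof -
    define u where "u = a / of_nat d"
    have pl: "poly (Pl a d l) y = l - u * l * y^d" for l y by (simp add: poly_Pl u_def)
    show ?thesis unfolding pl h u_def[symmetric] by (simp add: algebra_simps)
  qed
  thus ?thesis using l1 by (simp add: sigma_fn_def)
qed

lemma part3:
  fixes a lam x c :: "'k::field_char_0"
  assumes lam: "lam ^ d = 1" and d: "d \<ge> 1" and x: "x \<noteq> 0"
  shows "inverse (lam ^ (r - 1)) * x ^ r *
              sigma_fn a d (inverse lam * x) (lam ^ (r - 1) * (c + (1 - lam) / x ^ r))
            = x ^ r * sigma_fn a d x c + poly (Pl a d 1) x - poly (Pl a d lam) x"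
proof -
  have lnz: "lam \<noteq> 0"
  proof
    assume "lam = 0" thus False using lam d by (simp add: power_0_left)
  qed
  have h: "(inverse lam * x)^d = x^d" by (simp add: power_mult_distrib lam power_inverse)
  have xr: "x^r \<noteq> 0" using x by simp
  have l: "inverse (lam^(r-1)) * lam^(r-1) = 1" using lnz by simp
  define L where "L = lam^(r-1)"
  define K where "K = c + (1 - lam) / x ^ r"
  define V where "V = 1 - a / of_nat d * x^d"
  have sg: "sigma_fn a d (inverse lam * x) C = V * C" for C by (simp add: sigma_fn_def h V_def)
  have "inverse L * x ^ r * sigma_fn a d (inverse lam * x) (L * K)
       = (inverse L * L) * (V * (x^r * K))" unfolding sg by (simp add: algebra_simps)
  also have "\<dots> = V * (x^r * K)" using l by (simp add: L_def)
  also have "x^r * K = x^r * c + (1 - lam)" using xr by (simp add: K_def field_simps)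
  finally have A: "inverse L * x ^ r * sigma_fn a d (inverse lam * x) (L * K) = V * (x ^ r * c + (1 - lam))" .
  define u where "u = a / of_nat d"
  have pl: "poly (Pl a d l) x = l - u * l * x^d" for l by (simp add: poly_Pl u_def)
  have rhs: "x ^ r * sigma_fn a d x c + poly (Pl a d 1) x - poly (Pl a d lam) x = V * (x ^ r * c + (1 - lam))"
    by (simp add: sigma_fn_def V_def pl u_def[symmetric] algebra_simps)
  show ?thesis using A unfolding rhs L_def K_def .
qed

lemma part4:
  fixes a lam x c :: "'k::field_char_0"
  assumes lam: "lam ^ d = 1" and d: "d \<ge> 1" and x: "x \<noteq> 0" and dr: "d < r" and rd: "r < 2*d"
  shows "inverse (lam ^ (r - 1)) * x ^ r *
              tau_fn a d r (inverse lam * x)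
                (lam ^ (r - 1) * (c + (poly (Pl a d 1) x - poly (Pl a d lam) x) / x ^ r))
            = x ^ r * tau_fn a d r x c + 1 - lam"
proof -
  have lnz: "lam \<noteq> 0"
  proof
    assume "lam = 0" thus False using lam d by (simp add: power_0_left)
  qed
  have h: "(inverse lam * x)^d = x^d" by (simp add: power_mult_distrib lam power_inverse)
  have xr: "x^r \<noteq> 0" using x by simp
  have l: "inverse (lam^(r-1)) * lam^(r-1) = 1" using lnz by simp
  have e1: "(r - 1) + (2*d - r) = 2*d - 1" using dr rd by simp
  have l2: "lam^(2*d - 1) * lam = 1"
  proof -
    have "lam^(2*d - 1) * lam = lam^(Suc (2*d - 1))" by simp
    also have "Suc (2*d - 1) = 2*d" using d by simp
    also have "lam^(2*d) = 1" by (simp add: power_mult lam mult.commute[of 2 d])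
    finally show ?thesis .
  qed
  have il: "inverse (lam ^ (r - 1)) * inverse (lam^(2*d - r)) = lam"
  proof -
    have "inverse (lam ^ (r - 1)) * inverse (lam^(2*d - r)) = inverse (lam^((r - 1) + (2*d - r)))"
      by (simp add: power_add inverse_mult_distrib)
    also have "\<dots> = inverse (lam^(2*d-1))" by (simp only: e1)
    also have "\<dots> = lam" using l2 by (simp add: inverse_unique)
    finally show ?thesis .
  qed
  have xx: "x^r * x^(2*d - r) = x^d * x^d" using rd by (simp add: power_add[symmetric] mult_2)
  define u where "u = a / of_nat d"
  define L where "L = lam^(r-1)"
  define M where "M = inverse (lam^(2*d - r))"
  define E where "E = a^2 / of_nat d ^ 2"
  have Eu: "E = u^2" by (simp add: E_def u_def power_divide)
  define D where "D = poly (Pl a d 1) x - poly (Pl a d lam) x"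
  have D: "D = (1 - lam) * (1 - u * x^d)"
  proof -
    have pl: "poly (Pl a d l) x = l - u * l * x^d" for l by (simp add: poly_Pl u_def)
    show ?thesis by (simp add: D_def pl algebra_simps)
  qed
  define K where "K = c + D / x^r"
  have tg: "tau_fn a d r (inverse lam * x) C = - E * (M * x^(2*d - r)) + (1 + u * x^d) * C" for C
  proof -
    have h2: "(inverse lam * x)^(2*d - r) = M * x^(2*d-r)" by (simp add: M_def power_mult_distrib power_inverse)
    show ?thesis unfolding tau_fn_def h h2 E_def u_def by simp
  qed
  have "inverse L * x ^ r * tau_fn a d r (inverse lam * x) (L * K)
     = - E * (inverse L * M) * (x^r * x^(2*d - r)) + (1 + u * x^d) * (inverse L * L) * (x^r * K)"
    unfolding tg by (simp add: algebra_simps)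
  also have "\<dots> = - E * lam * (x^d * x^d) + (1 + u * x^d) * (x^r * c + D)"
  proof -
    have xK: "x^r * K = x^r*c + D" using xr by (simp add: K_def field_simps)
    have a1: "inverse L * M = lam" using il by (simp add: L_def M_def)
    have a2: "inverse L * L = 1" using l by (simp add: L_def)
    show ?thesis unfolding a1 a2 xx xK by simp
  qed
  also have "\<dots> = x ^ r * tau_fn a d r x c + 1 - lam"
  proof -
    have tx: "tau_fn a d r x c = -E * x^(2*d-r) + (1 + u * x^d) * c" by (simp add: tau_fn_def E_def u_def)
    have "x^r * (-E * x^(2*d-r) + (1 + u * x^d) * c) = -E * (x^r * x^(2*d-r)) + (1 + u * x^d) * (x^r * c)"
      by (simp add: algebra_simps)
    also have "\<dots> = -E * (x^d * x^d) + (1 + u * x^d) * (x^r * c)" unfolding xx ..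
    finally have B: "x^r * tau_fn a d r x c = -E * (x^d * x^d) + (1 + u * x^d) * (x^r * c)" unfolding tx .
    show ?thesis unfolding B by (simp add: D Eu algebra_simps power2_eq_square)
  qed
  finally show ?thesis by (simp add: L_def K_def D_def)
qed



lemma pf_fst: "polyfun4 (\<lambda>p. fst p)"
proof -
  have "(\<lambda>(x1::'a,x2::'a,x3::'a,x4::'a). x1) = (\<lambda>p. fst p)" by (auto simp: fun_eq_iff)
  thus ?thesis using polyfun4.proj1[where 'k='a] by metis
qed
lemma pf_snd1: "polyfun4 (\<lambda>p. fst (snd p))"
proof -
  have "(\<lambda>(x1::'a,x2::'a,x3::'a,x4::'a). x2) = (\<lambda>p. fst (snd p))" by (auto simp: fun_eq_iff)
  thus ?thesis using polyfun4.proj2[where 'k='a] by metis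
qed
lemma pf_snd2: "polyfun4 (\<lambda>p. fst (snd (snd p)))"
proof -
  have "(\<lambda>(x1::'a,x2::'a,x3::'a,x4::'a). x3) = (\<lambda>p. fst (snd (snd p)))" by (auto simp: fun_eq_iff)
  thus ?thesis using polyfun4.proj3[where 'k='a] by metis
qed
lemma pf_snd3: "polyfun4 (\<lambda>p. snd (snd (snd p)))"
proof -
  have "(\<lambda>(x1::'a,x2::'a,x3::'a,x4::'a). x4) = (\<lambda>p. snd (snd (snd p)))" by (auto simp: fun_eq_iff)
  thus ?thesis using polyfun4.proj4[where 'k='a] by metis
qed

lemma pf_neg: "polyfun4 f \<Longrightarrow> polyfun4 (\<lambda>p. - f p)"
  using polyfun4.mult[OF polyfun4.const[of "-1"], of f] by simp

lemma pf_diff: "polyfun4 f \<Longrightarrow> polyfun4 g \<Longrightarrow> polyfun4 (\<lambda>p. f p - g p)"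
  using polyfun4.add[OF _ pf_neg, of f g] by simp

lemma pf_pow: "polyfun4 f \<Longrightarrow> polyfun4 (\<lambda>p. f p ^ n)"
  by (induction n) (auto intro: polyfun4.const polyfun4.mult)

lemmas pf_rules = polyfun4.const polyfun4.add polyfun4.mult pf_neg pf_diff pf_pow

lemma pf_binom:
  assumes "polyfun4 A" "polyfun4 B"
  shows "\<exists>Q. polyfun4 Q \<and> (\<forall>p. (A p + B p)^n = A p ^ n + B p * Q p)"
proof (induction n)
  case 0 show ?case by (rule exI[of _ "\<lambda>_. 0"]) (simp add: polyfun4.const)
next
  case (Suc n)
  then obtain Q where Q: "polyfun4 Q" "\<forall>p. (A p + B p)^n = A p ^ n + B p * Q p" by blast
  show ?case
  proof (rule exI[of _ "\<lambda>p. A p ^ n + Q p * A p + Q p * B p"], intro conjI allI)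
    show "polyfun4 (\<lambda>p. A p ^ n + Q p * A p + Q p * B p)"
      using assms Q(1) by (intro pf_rules)
    fix p
    have h: "(A p + B p)^n = A p ^ n + B p * Q p" using Q(2) by blast
    show "(A p + B p) ^ Suc n = A p ^ Suc n + B p * (A p ^ n + Q p * A p + Q p * B p)"
      by (simp only: power_Suc h) (simp add: algebra_simps)
  qed
qed

lemma pf_one_plus:
  assumes "polyfun4 s"
  shows "\<exists>T. polyfun4 T \<and> (\<forall>p. (1 + s p)^n = 1 + of_nat n * s p + (s p)^2 * T p)"
proof (induction n)
  case 0 show ?case by (rule exI[of _ "\<lambda>_. 0"]) (simp add: polyfun4.const)
next
  case (Suc n)
  then obtain T where T: "polyfun4 T" "\<forall>p. (1 + s p)^n = 1 + of_nat n * s p + (s p)^2 * T p" by blast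
  show ?case
  proof (rule exI[of _ "\<lambda>p. T p + of_nat n + s p * T p"], intro conjI allI)
    show "polyfun4 (\<lambda>p. T p + of_nat n + s p * T p)"
      using assms T(1) by (intro pf_rules)
    fix p
    have h: "(1 + s p)^n = 1 + of_nat n * s p + (s p)^2 * T p" using T(2) by blast
    show "(1 + s p) ^ Suc n = 1 + of_nat (Suc n) * s p + (s p)^2 * (T p + of_nat n + s p * T p)"
      by (simp only: power_Suc h) (simp add: algebra_simps power2_eq_square)
  qed
qed

lemma alg1:
  fixes xr Z Y a X1 v e X2 W Q2 T2 xk :: "'k::comm_ring_1"
  assumes eq: "xr*Z + Y^d + a*X1 = 1"
    and hQ: "(v*Y + e*X2*W)^d = v^d*Y^d + e*X2*W*Q2"
    and hT: "v^d = 1 + a*X1 + e*X2*T2"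
    and X2: "X2 = X1*X1" and xk: "xr*xk = X2"
  shows "xr*(v^d*Z + xk*(a^2 - e*T2*(1 - a*X1) - e*W*Q2)) + (v*Y + e*X2*W)^d = 1"
proof -
  have "xr*(v^d*Z + xk*(a^2 - e*T2*(1 - a*X1) - e*W*Q2)) + (v*Y + e*X2*W)^d
     = v^d*(xr*Z + Y^d) + (xr*xk)*(a^2 - e*T2*(1 - a*X1))"
    unfolding hQ by (simp add: xk[symmetric] algebra_simps)
  also have "\<dots> = v^d*(1 - a*X1) + X2*(a^2 - e*T2*(1 - a*X1))"
  proof -
    have e2: "xr*Z + Y^d = 1 - a*X1" using eq by (simp add: eq_diff_eq)
    show ?thesis by (simp only: e2 xk)
  qed
  also have "\<dots> = 1" unfolding hT X2 by (simp add: algebra_simps power2_eq_square)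
  finally show ?thesis .
qed

lemma alg2:
  fixes xr z y u e X2 w Q1 a X1 T1 xk :: "'k::comm_ring_1"
  assumes eq: "xr*z + y^d = 1"
    and hQ: "(u*y + - (e*X2*w))^d = u^d*y^d + - (e*X2*w)*Q1"
    and hT: "u^d = 1 - a*X1 + e*X2*T1"
    and xk: "xr*xk = X2"
  shows "xr*(u^d*z - xk*(e*T1 - e*w*Q1)) + (u*y + - (e*X2*w))^d + a*X1 = 1"
proof -
  have "xr*(u^d*z - xk*(e*T1 - e*w*Q1)) + (u*y + - (e*X2*w))^d + a*X1
     = u^d*(xr*z + y^d) - (xr*xk)*(e*T1) + a*X1"
    unfolding hQ by (simp add: xk[symmetric] algebra_simps)
  also have "\<dots> = 1" using eq xk unfolding hT by (simp add: algebra_simps)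
  finally show ?thesis .
qed

lemma iso_part:
  fixes a :: "'k::field_char_0" and d r :: nat
  assumes d2: "d \<ge> 2" and dr: "d < r" and rd: "r < 2 * d"
  shows "iso_affine4 (Xt_A1 a d r) (Vt_A1 d r :: ('k \<times> 'k \<times> 'k \<times> 'k) set)"
proof -
  define u0 :: 'k where "u0 = a / of_nat d"
  define e where "e = u0^2"
  define k where "k = 2*d - r"
  have k0: "k > 0" using rd by (simp add: k_def)
  have z0k: "(0::'k)^k = 0" using k0 by simp
  have z0d: "(0::'k)^d = 0" using d2 by simp
  have dnz: "(of_nat d :: 'k) \<noteq> 0" using d2 by simp
  have du: "of_nat d * u0 = a" using dnz by (simp add: u0_def)
  define X :: "'k \<times> 'k \<times> 'k \<times> 'k \<Rightarrow> 'k" where "X = (\<lambda>p. fst p)"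
  define Y :: "'k \<times> 'k \<times> 'k \<times> 'k \<Rightarrow> 'k" where "Y = (\<lambda>p. fst (snd p))"
  define Z :: "'k \<times> 'k \<times> 'k \<times> 'k \<Rightarrow> 'k" where "Z = (\<lambda>p. fst (snd (snd p)))"
  define W :: "'k \<times> 'k \<times> 'k \<times> 'k \<Rightarrow> 'k" where "W = (\<lambda>p. snd (snd (snd p)))"
  define X1 where "X1 = (\<lambda>p. X p ^ d)"
  define X2 where "X2 = (\<lambda>p. X1 p * X1 p)"
  define uu where "uu = (\<lambda>p. 1 - u0 * X1 p)"
  define vv where "vv = (\<lambda>p. 1 + u0 * X1 p)"
  have pX: "polyfun4 X" unfolding X_def by (rule pf_fst)
  have pY: "polyfun4 Y" unfolding Y_def by (rule pf_snd1)
  have pZ: "polyfun4 Z" unfolding Z_def by (rule pf_snd2)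
  have pW: "polyfun4 W" unfolding W_def by (rule pf_snd3)
  have pX1: "polyfun4 X1" unfolding X1_def using pX by (intro pf_rules)
  have pX2: "polyfun4 X2" unfolding X2_def using pX1 by (intro pf_rules)
  have puu: "polyfun4 uu" unfolding uu_def using pX1 by (intro pf_rules)
  have pvv: "polyfun4 vv" unfolding vv_def using pX1 by (intro pf_rules)
  have uv: "uu p * vv p + e * X2 p = 1" for p
    by (simp add: uu_def vv_def X2_def e_def algebra_simps power2_eq_square)
  obtain Q2 where pQ2: "polyfun4 Q2" and hQ2: "\<forall>p. (vv p * Y p + e * X2 p * W p)^d = (vv p * Y p)^d + (e * X2 p * W p) * Q2 p"
  proof -
    have h1: "polyfun4 (\<lambda>p. vv p * Y p)" using pvv pY pX2 pW by (intro pf_rules)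
    have h2: "polyfun4 (\<lambda>p. e * X2 p * W p)" using pvv pY pX2 pW by (intro pf_rules)
    from pf_binom[OF h1 h2, of d] show ?thesis using that by blast
  qed
  obtain Q1 where pQ1: "polyfun4 Q1" and hQ1: "\<forall>p. (uu p * Y p + - (e * X2 p * W p))^d = (uu p * Y p)^d + (- (e * X2 p * W p)) * Q1 p"
  proof -
    have h1: "polyfun4 (\<lambda>p. uu p * Y p)" using puu pY pX2 pW by (intro pf_rules)
    have h2: "polyfun4 (\<lambda>p. - (e * X2 p * W p))" using puu pY pX2 pW by (intro pf_rules)
    from pf_binom[OF h1 h2, of d] show ?thesis using that by blast
  qed
  obtain T2 where pT2: "polyfun4 T2" and hT2: "\<forall>p. (1 + u0 * X1 p)^d = 1 + of_nat d * (u0 * X1 p) + (u0 * X1 p)^2 * T2 p"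
  proof -
    have "polyfun4 (\<lambda>p. u0 * X1 p)" using pX1 by (intro pf_rules)
    from pf_one_plus[OF this, of d] show ?thesis using that by blast
  qed
  obtain T1 where pT1: "polyfun4 T1" and hT1: "\<forall>p. (1 + - (u0 * X1 p))^d = 1 + of_nat d * (- (u0 * X1 p)) + (- (u0 * X1 p))^2 * T1 p"
  proof -
    have "polyfun4 (\<lambda>p. - (u0 * X1 p))" using pX1 by (intro pf_rules)
    from pf_one_plus[OF this, of d] show ?thesis using that by blast
  qed
  have vvd: "vv p ^ d = 1 + a * X1 p + e * X2 p * T2 p" for p
    using hT2[rule_format, of p] by (simp add: vv_def du[symmetric] e_def X2_def power2_eq_square algebra_simps)
  have uud: "uu p ^ d = 1 - a * X1 p + e * X2 p * T1 p" for p
    using hT1[rule_format, of p] by (simp add: uu_def du[symmetric] e_def X2_def power2_eq_square algebra_simps)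
  define F where "F = (\<lambda>p. (X p, vv p * Y p + e * X2 p * W p,
      vv p ^ d * Z p + X p ^ k * (a^2 - e * T2 p * (1 - a * X1 p) - e * W p * Q2 p),
      - Y p + uu p * W p))"
  define G where "G = (\<lambda>p. (X p, uu p * Y p + - (e * X2 p * W p),
      uu p ^ d * Z p - X p ^ k * (e * T1 p - e * W p * Q1 p),
      Y p + vv p * W p))"
  have xk: "X p ^ r * X p ^ k = X2 p" for p
    using rd by (simp add: X2_def X1_def k_def power_add[symmetric] mult_2)
  have pF: "polymap4 F" unfolding polymap4_def F_def
    using pX pY pZ pW pX1 pX2 puu pvv pQ2 pT2 by (simp; intro conjI pf_rules)
  have pG: "polymap4 G" unfolding polymap4_def G_def
    using pX pY pZ pW pX1 pX2 puu pvv pQ1 pT1 by (simp; intro conjI pf_rules)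
  have inX: "p \<in> Xt_A1 a d r \<longleftrightarrow> X p ^ r * Z p + Y p ^ d + a * X1 p = 1" for p
    by (cases p) (simp add: Xt_A1_def X_def Y_def Z_def X1_def)
  have inV: "p \<in> Vt_A1 d r \<longleftrightarrow> X p ^ r * Z p + Y p ^ d = 1" for p
    by (cases p) (simp add: Vt_A1_def X_def Y_def Z_def)
  have FX: "F p \<in> Vt_A1 d r" if "p \<in> Xt_A1 a d r" for p
  proof -
    have eq: "X p ^ r * Z p + Y p ^ d + a * X1 p = 1" using that inX by blast
    have hq: "(vv p * Y p + e * X2 p * W p)^d = vv p ^ d * Y p ^ d + e * X2 p * W p * Q2 p"
      using hQ2[rule_format, of p] by (simp add: power_mult_distrib)
    show ?thesis unfolding inV F_def
      using alg1[OF eq hq vvd X2_def[THEN fun_cong] xk] by (simp add: X_def Y_def Z_def)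
  qed
  have GV: "G p \<in> Xt_A1 a d r" if "p \<in> Vt_A1 d r" for p
  proof -
    have eq: "X p ^ r * Z p + Y p ^ d = 1" using that inV by blast
    have hq: "(uu p * Y p + - (e * X2 p * W p))^d = uu p ^ d * Y p ^ d + - (e * X2 p * W p) * Q1 p"
      using hQ1[rule_format, of p] by (simp add: power_mult_distrib)
    show ?thesis unfolding inX G_def
      using alg2[OF eq hq uud xk] by (simp add: X_def Y_def Z_def X1_def)
  qed
  have GF: "G (F p) = p" if "p \<in> Xt_A1 a d r" for p
  proof -
    have m: "G (F p) \<in> Xt_A1 a d r" using GV FX that by blast
    have e1: "X (G (F p)) = X p" by (simp add: G_def F_def X_def)
    have e2: "Y (G (F p)) = Y p"
    proof -
      have "Y (G (F p)) = uu p * (vv p * Y p + e * X2 p * W p) + - (e * X2 p * (- Y p + uu p * W p))"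
        by (simp add: G_def F_def X_def Y_def W_def uu_def vv_def X2_def X1_def)
      also have "\<dots> = (uu p * vv p + e * X2 p) * Y p" by (simp add: algebra_simps)
      finally show ?thesis by (simp add: uv)
    qed
    have e4: "W (G (F p)) = W p"
    proof -
      have "W (G (F p)) = (vv p * Y p + e * X2 p * W p) + vv p * (- Y p + uu p * W p)"
        by (simp add: G_def F_def X_def Y_def W_def uu_def vv_def X2_def X1_def)
      also have "\<dots> = (uu p * vv p + e * X2 p) * W p" by (simp add: algebra_simps)
      finally show ?thesis by (simp add: uv)
    qed
    have e3: "Z (G (F p)) = Z p"
    proof (cases "X p = 0")
      case True
      have "Z (G (F p)) = uu (F p) ^ d * Z (F p) - X (F p) ^ k * (e * T1 (F p) - e * W (F p) * Q1 (F p))"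
        by (simp add: G_def Z_def X_def W_def)
      also have "\<dots> = Z (F p)" using True
        by (simp add: z0k z0d F_def X_def uu_def X1_def)
      also have "\<dots> = Z p" using True
        by (simp add: z0k z0d F_def X_def Z_def vv_def X1_def)
      finally show ?thesis .
    next
      case False
      have a1: "X p ^ r * Z (G (F p)) + Y p ^ d + a * X1 p = 1"
        using m inX[of "G (F p)"] e1 e2 by (simp add: X1_def)
      have a2: "X p ^ r * Z p + Y p ^ d + a * X1 p = 1" using that inX by blast
      from a1 a2 have "X p ^ r * Z (G (F p)) = X p ^ r * Z p" by (metis add_right_cancel)
      thus ?thesis using False by simp
    qed
    show ?thesis using e1 e2 e3 e4 by (simp add: X_def Y_def Z_def W_def prod_eq_iff)
  qed
  have FG: "F (G p) = p" if "p \<in> Vt_A1 d r" for p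
  proof -
    have m: "F (G p) \<in> Vt_A1 d r" using GV FX that by blast
    have e1: "X (F (G p)) = X p" by (simp add: G_def F_def X_def)
    have e2: "Y (F (G p)) = Y p"
    proof -
      have "Y (F (G p)) = vv p * (uu p * Y p + - (e * X2 p * W p)) + e * X2 p * (Y p + vv p * W p)"
        by (simp add: G_def F_def X_def Y_def W_def uu_def vv_def X2_def X1_def)
      also have "\<dots> = (uu p * vv p + e * X2 p) * Y p" by (simp add: algebra_simps)
      finally show ?thesis by (simp add: uv)
    qed
    have e4: "W (F (G p)) = W p"
    proof -
      have "W (F (G p)) = - (uu p * Y p + - (e * X2 p * W p)) + uu p * (Y p + vv p * W p)"
        by (simp add: G_def F_def X_def Y_def W_def uu_def vv_def X2_def X1_def)
      also have "\<dots> = (uu p * vv p + e * X2 p) * W p" by (simp add: algebra_simps)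
      finally show ?thesis by (simp add: uv)
    qed
    have e3: "Z (F (G p)) = Z p"
    proof (cases "X p = 0")
      case True
      have "Z (F (G p)) = vv (G p) ^ d * Z (G p) + X (G p) ^ k * (a^2 - e * T2 (G p) * (1 - a * X1 (G p)) - e * W (G p) * Q2 (G p))"
        by (simp add: F_def Z_def X_def W_def)
      also have "\<dots> = Z (G p)" using True
        by (simp add: z0k z0d G_def X_def vv_def X1_def)
      also have "\<dots> = Z p" using True
        by (simp add: z0k z0d G_def X_def Z_def uu_def X1_def)
      finally show ?thesis .
    next
      case False
      have a1: "X p ^ r * Z (F (G p)) + Y p ^ d = 1"
        using m inV[of "F (G p)"] e1 e2 by simp
      have a2: "X p ^ r * Z p + Y p ^ d = 1" using that inV by blast
      from a1 a2 have "X p ^ r * Z (F (G p)) = X p ^ r * Z p" by (metis add_right_cancel)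
      thus ?thesis using False by simp
    qed
    show ?thesis using e1 e2 e3 e4 by (simp add: X_def Y_def Z_def W_def prod_eq_iff)
  qed
  show ?thesis unfolding iso_affine4_def
    by (rule exI[of _ F], rule exI[of _ G]) (use pF pG FX GV GF FG in blast)
qed


theorem proposition1p4p27:
  fixes a :: "'k :: {alg_closed_field, field_char_0}" and d r :: nat
  assumes "d \<ge> 2" and "d < r" and "r < 2 * d"
  shows "(\<forall>lam. lam ^ d = 1 \<longrightarrow>
            p_lam a d r lam = [:lam:] - smult (a / of_nat d * lam) (monom 1 d))
    \<and> (\<forall>lam x c. lam ^ d = 1 \<and> lam \<noteq> 1 \<longrightarrow>
            sigma_fn a d x c = 1 / (1 - lam) *
              (poly (p_lam a d r 1) (lam * x) - poly (p_lam a d r lam) (lam * x)) * c)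
    \<and> (\<forall>lam x c. lam ^ d = 1 \<and> x \<noteq> 0 \<longrightarrow>
            inverse (lam ^ (r - 1)) * x ^ r *
              sigma_fn a d (inverse lam * x) (lam ^ (r - 1) * (c + (1 - lam) / x ^ r))
            = x ^ r * sigma_fn a d x c + poly (p_lam a d r 1) x - poly (p_lam a d r lam) x)
    \<and> (\<forall>lam x c. lam ^ d = 1 \<and> x \<noteq> 0 \<longrightarrow>
            inverse (lam ^ (r - 1)) * x ^ r *
              tau_fn a d r (inverse lam * x)
                (lam ^ (r - 1) * (c + (poly (p_lam a d r 1) x - poly (p_lam a d r lam) x) / x ^ r))
            = x ^ r * tau_fn a d r x c + 1 - lam)
    \<and> iso_affine4 (Xt_A1 a d r) (Vt_A1 d r :: ('k \<times> 'k \<times> 'k \<times> 'k) set)"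
  proof -
  have d1: "d \<ge> 1" using assms by simp
  have P: "p_lam a d r lam = Pl a d lam" if "lam ^ d = 1" for lam
    using p_lam_eq[OF assms that] .
  have P1: "p_lam a d r 1 = Pl a d 1" using P by simp
  show ?thesis
  proof (intro conjI allI impI)
    fix lam :: 'k assume "lam ^ d = 1"
    thus "p_lam a d r lam = [:lam:] - smult (a / of_nat d * lam) (monom 1 d)"
      using P by (simp add: Pl_def)
  next
    fix lam x c :: 'k assume h: "lam ^ d = 1 \<and> lam \<noteq> 1"
    thus "sigma_fn a d x c = 1 / (1 - lam) *
              (poly (p_lam a d r 1) (lam * x) - poly (p_lam a d r lam) (lam * x)) * c"
      using part2[OF conjunct1[OF h] conjunct2[OF h], of a x c] P[OF conjunct1[OF h]] P1 by simp
  next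
    fix lam x c :: 'k assume h: "lam ^ d = 1 \<and> x \<noteq> 0"
    thus "inverse (lam ^ (r - 1)) * x ^ r *
              sigma_fn a d (inverse lam * x) (lam ^ (r - 1) * (c + (1 - lam) / x ^ r))
            = x ^ r * sigma_fn a d x c + poly (p_lam a d r 1) x - poly (p_lam a d r lam) x"
      using part3[OF conjunct1[OF h] d1 conjunct2[OF h], of r a c] P[OF conjunct1[OF h]] P1 by simp
  next
    fix lam x c :: 'k assume h: "lam ^ d = 1 \<and> x \<noteq> 0"
    thus "inverse (lam ^ (r - 1)) * x ^ r *
              tau_fn a d r (inverse lam * x)
                (lam ^ (r - 1) * (c + (poly (p_lam a d r 1) x - poly (p_lam a d r lam) x) / x ^ r))
            = x ^ r * tau_fn a d r x c + 1 - lam"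
      using part4[OF conjunct1[OF h] d1 conjunct2[OF h] assms(2) assms(3), of a c] P[OF conjunct1[OF h]] P1 by simp
  next
    show "iso_affine4 (Xt_A1 a d r) (Vt_A1 d r :: ('k \<times> 'k \<times> 'k \<times> 'k) set)"
      by (rule iso_part[OF assms])
  qed
qed

end
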